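(* Let $w,n$ be positive integers with $w\le n$ such that $r:=\binom{n}{w}/\lfloor n/w\rfloor$ is an even integer. Let $a$ be the remainder of $n$ divided by $w$ and suppose $2a<w$. Suppose that there exists a $2$-good almost-regular edge-coloring of $K_n^w$. Then there exists a $\mathrm{TOC}_3(n,2w-1,w)$.
   Context: $\mathcal{H}_q(n,w)$ is the set of all words of length $n$ over $\mathbb{Z}_q$ with exactly $w$ nonzero entries, with the Hamming distance. An $(n,d,w)_q$-code is a nonempty subset of $\mathcal{H}_q(n,w)$ in which any two distinct words have Hamming distance at least $d$; $A_q(n,d,w)$ is the maximum size of such a code, and a code of this size is optimal. A $\mathrm{TOC}_q(n,d,w)$ is a partition of $\mathcal{H}_q(n,w)$ into optimal $(n,d,w)_q$-codes. $K_n^w$ is the complete $w$-uniform hypergraph on vertex set $[n]$. A sub-hypergraph with vertex set $[n]$ is almost-regular if the degrees of any two vertices differ by at most one. Suppose $g\mid r$ where $r=\binom{n}{w}/\lfloor n/w\rfloor$. An almost-regular edge-coloring $\{\mathcal{F}_{i,j}:1\le i\le r/g,\,1\le j\le g\}$ of $K_n^w$ is a partition of the edges of $K_n^w$ into classes $\mathcal{F}_{i,j}$, each an almost-regular sub-hypergraph (on vertex set $[n]$) with exactly $\lfloor n/w\rfloor$ edges. It is $g$-good if for each $i$ the union $\mathcal{A}_i=\bigcup_{j=1}^g\mathcal{F}_{i,j}$ is the block set of a packing $\mathrm{P}(2,w,n)$, i.e. every pair of elements of $[n]$ is contained in at most one edge of $\mathcal{A}_i$. *)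

theory Defs
  imports Main "HOL-Library.Disjoint_Sets"
begin

text \<open>Words of length n over Z_q are functions nat => nat, supported on {0..<n},
  with values in {0..<q}; the zero symbol is 0.\<close>

definition hamming :: "nat \<Rightarrow> (nat \<Rightarrow> nat) \<Rightarrow> (nat \<Rightarrow> nat) \<Rightarrow> nat" where
  "hamming n x y = card {i. i < n \<and> x i \<noteq> y i}"

definition Hq :: "nat \<Rightarrow> nat \<Rightarrow> nat \<Rightarrow> (nat \<Rightarrow> nat) set" where
  "Hq q n w = {x. (\<forall>i. n \<le> i \<longrightarrow> x i = 0) \<and> (\<forall>i<n. x i < q)
                 \<and> card {i. i < n \<and> x i \<noteq> 0} = w}"

definition is_code :: "nat \<Rightarrow> nat \<Rightarrow> nat \<Rightarrow> nat \<Rightarrow> (nat \<Rightarrow> nat) set \<Rightarrow> bool" where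
  "is_code q n d w C \<longleftrightarrow> C \<noteq> {} \<and> C \<subseteq> Hq q n w \<and>
     (\<forall>x\<in>C. \<forall>y\<in>C. x \<noteq> y \<longrightarrow> d \<le> hamming n x y)"

definition Aq :: "nat \<Rightarrow> nat \<Rightarrow> nat \<Rightarrow> nat \<Rightarrow> nat" where
  "Aq q n d w = Max {card C | C. is_code q n d w C}"

definition optimal_code :: "nat \<Rightarrow> nat \<Rightarrow> nat \<Rightarrow> nat \<Rightarrow> (nat \<Rightarrow> nat) set \<Rightarrow> bool" where
  "optimal_code q n d w C \<longleftrightarrow> is_code q n d w C \<and> card C = Aq q n d w"

definition is_TOC :: "nat \<Rightarrow> nat \<Rightarrow> nat \<Rightarrow> nat \<Rightarrow> (nat \<Rightarrow> nat) set set \<Rightarrow> bool" where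
  "is_TOC q n d w P \<longleftrightarrow> partition_on (Hq q n w) P \<and> (\<forall>C\<in>P. optimal_code q n d w C)"

definition complete_hypergraph :: "nat \<Rightarrow> nat \<Rightarrow> nat set set" where
  "complete_hypergraph n w = {e. e \<subseteq> {0..<n} \<and> card e = w}"

definition hdegree :: "nat set set \<Rightarrow> nat \<Rightarrow> nat" where
  "hdegree F v = card {e\<in>F. v \<in> e}"

definition almost_regular :: "nat \<Rightarrow> nat set set \<Rightarrow> bool" where
  "almost_regular n F \<longleftrightarrow>
     (\<forall>u<n. \<forall>v<n. hdegree F u \<le> hdegree F v + 1)"

definition is_packing2 :: "nat \<Rightarrow> nat set set \<Rightarrow> bool" where
  "is_packing2 n A \<longleftrightarrow>
     (\<forall>x<n. \<forall>y<n. x \<noteq> y \<longrightarrow> card {e\<in>A. x \<in> e \<and> y \<in> e} \<le> 1)"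

definition almost_regular_coloring ::
    "nat \<Rightarrow> nat \<Rightarrow> nat \<Rightarrow> (nat \<Rightarrow> nat \<Rightarrow> nat set set) \<Rightarrow> bool" where
  "almost_regular_coloring n w g F \<longleftrightarrow>
     (let r = (n choose w) div (n div w);
          I = {1..r div g} \<times> {1..g} in
      (\<Union>(i,j)\<in>I. F i j) = complete_hypergraph n w \<and>
      (\<forall>(i,j)\<in>I. \<forall>(i',j')\<in>I. (i,j) \<noteq> (i',j') \<longrightarrow> F i j \<inter> F i' j' = {}) \<and>
      (\<forall>(i,j)\<in>I. card (F i j) = n div w \<and> almost_regular n (F i j)))"

definition good_coloring ::
    "nat \<Rightarrow> nat \<Rightarrow> nat \<Rightarrow> (nat \<Rightarrow> nat \<Rightarrow> nat set set) \<Rightarrow> bool" where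
  "good_coloring n w g F \<longleftrightarrow>
     almost_regular_coloring n w g F \<and>
     (\<forall>i\<in>{1..((n choose w) div (n div w)) div g}.
        is_packing2 n (\<Union>j\<in>{1..g}. F i j))"

end

theory Submission
  imports Defs
begin


definition good_col :: "nat set set \<Rightarrow> nat set set \<Rightarrow> nat \<Rightarrow> nat set \<Rightarrow> (nat \<Rightarrow> nat) \<Rightarrow> bool" where
  "good_col E1 E2 w Q \<pi> \<longleftrightarrow> (\<forall>g\<in>E1\<union>E2. inj_on \<pi> (g\<inter>Q) \<and> \<pi> ` (g\<inter>Q) \<subseteq> {..<w})"

lemma good_col_ext:
  assumes "good_col E1 E2 w Q \<pi>" "c < w" "p \<notin> Q"
    and "\<forall>g\<in>E1\<union>E2. p \<in> g \<longrightarrow> c \<notin> \<pi> ` (g\<inter>Q)"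
  shows "good_col E1 E2 w (insert p Q) (\<pi>(p:=c))"
  unfolding good_col_def
proof
  fix g assume g: "g \<in> E1\<union>E2"
  have eq: "inj_on (\<pi>(p:=c)) (g\<inter>Q) = inj_on \<pi> (g\<inter>Q)"
    by (rule inj_on_cong) (use assms(3) in auto)
  have im: "(\<pi>(p:=c)) ` (g\<inter>Q) = \<pi> ` (g\<inter>Q)" using assms(3) by auto
  show "inj_on (\<pi>(p:=c)) (g \<inter> insert p Q) \<and> (\<pi>(p:=c)) ` (g \<inter> insert p Q) \<subseteq> {..<w}"
  proof (cases "p \<in> g")
    case True
    then have "g \<inter> insert p Q = insert p (g\<inter>Q)" by auto
    then show ?thesis using eq im assms g True unfolding good_col_def
      by (auto simp: inj_on_insert)
  next
    case False
    then have "g \<inter> insert p Q = g\<inter>Q" by auto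
    then show ?thesis using eq im assms g unfolding good_col_def by auto
  qed
qed

lemma konig_step:
  assumes d1: "\<forall>e\<in>E1. \<forall>e'\<in>E1. e \<noteq> e' \<longrightarrow> e \<inter> e' = {}"
    and d2: "\<forall>e\<in>E2. \<forall>e'\<in>E2. e \<noteq> e' \<longrightarrow> e \<inter> e' = {}"
    and fin: "\<forall>g\<in>E1\<union>E2. finite g \<and> card g \<le> w" and w0: "0 < w"
    and good: "good_col E1 E2 w Q \<pi>" and pQ: "p \<notin> Q"
  shows "\<exists>\<pi>'. good_col E1 E2 w (insert p Q) \<pi>'"
proof -
  define A1 where "A1 = {\<pi> q |q. q\<in>Q \<and> (\<exists>e\<in>E1. p\<in>e \<and> q\<in>e)}"
  define A2 where "A2 = {\<pi> q |q. q\<in>Q \<and> (\<exists>e\<in>E2. p\<in>e \<and> q\<in>e)}"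
  have miss: "\<exists>c<w. c \<notin> {\<pi> q |q. q\<in>Q \<and> (\<exists>e\<in>E. p\<in>e \<and> q\<in>e)}"
    if E: "E \<subseteq> E1 \<union> E2" "\<forall>e\<in>E. \<forall>e'\<in>E. e \<noteq> e' \<longrightarrow> e \<inter> e' = {}" for E
  proof -
    let ?A = "{\<pi> q |q. q\<in>Q \<and> (\<exists>e\<in>E. p\<in>e \<and> q\<in>e)}"
    have "finite ?A \<and> card ?A < w"
    proof (cases "\<exists>e\<in>E. p\<in>e")
      case True
      then obtain e where e: "e\<in>E" "p\<in>e" by blast
      have uniq: "\<forall>e'\<in>E. p \<in> e' \<longrightarrow> e' = e" using e E(2) by blast
      have Aeq: "?A = \<pi> ` (e\<inter>Q)"
      proof
        show "?A \<subseteq> \<pi> ` (e\<inter>Q)" using uniq by fastforce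
        show "\<pi> ` (e\<inter>Q) \<subseteq> ?A" using e by fastforce
      qed
      have fe: "finite e" "card e \<le> w" using e E(1) fin by auto
      have "card (\<pi> ` (e\<inter>Q)) \<le> card (e\<inter>Q)" by (rule card_image_le) (use fe in simp)
      also have "\<dots> \<le> card (e - {p})" by (rule card_mono) (use fe pQ in auto)
      also have "\<dots> = card e - 1" using e(2) by simp
      also have "\<dots> < w" using fe w0 by linarith
      finally show ?thesis using Aeq fe by simp
    next
      case False
      then have A0: "?A = {}" by auto
      show ?thesis unfolding A0 using w0 by simp
    qed
    then have "\<not> {..<w} \<subseteq> ?A"
      using card_mono[of ?A "{..<w}"] by auto
    then show ?thesis by auto
  qed
  have A1mem: "\<pi> q \<in> A1" if "q \<in> Q" "e \<in> E1" "p \<in> e" "q \<in> e" for q e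
    unfolding A1_def using that by blast
  have A2mem: "\<pi> q \<in> A2" if "q \<in> Q" "e \<in> E2" "p \<in> e" "q \<in> e" for q e
    unfolding A2_def using that by blast
  have u1: "e = e'" if "e \<in> E1" "e' \<in> E1" "x \<in> e" "x \<in> e'" for e e' x
    using d1 that by blast
  have u2: "e = e'" if "e \<in> E2" "e' \<in> E2" "x \<in> e" "x \<in> e'" for e e' x
    using d2 that by blast
  obtain \<alpha> where al: "\<alpha> < w" "\<alpha> \<notin> A1" using miss[of E1] d1 unfolding A1_def by auto
  obtain \<beta> where be: "\<beta> < w" "\<beta> \<notin> A2" using miss[of E2] d2 unfolding A2_def by auto
  have ext: "\<exists>\<pi>'. good_col E1 E2 w (insert p Q) \<pi>'"
    if c: "c < w" "c \<notin> A1" "c \<notin> A2" for c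
  proof -
    have "\<forall>g\<in>E1\<union>E2. p \<in> g \<longrightarrow> c \<notin> \<pi> ` (g\<inter>Q)"
    proof (intro ballI impI notI)
      fix g assume g: "g \<in> E1\<union>E2" "p \<in> g" "c \<in> \<pi> ` (g\<inter>Q)"
      then obtain q where q: "q \<in> g" "q \<in> Q" "c = \<pi> q" by blast
      show False
      proof (cases "g \<in> E1")
        case True then show False using A1mem[OF q(2) True g(2) q(1)] q c by simp
      next
        case False then have "g \<in> E2" using g by blast
        then show False using A2mem[OF q(2) _ g(2) q(1)] q c by simp
      qed
    qed
    then show ?thesis using good_col_ext[OF good c(1) pQ] by blast
  qed
  show ?thesis
  proof (cases "\<alpha> \<in> A2 \<and> \<beta> \<in> A1")
    case False
    then show ?thesis using ext al be by blast
  next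
    case True
    then have ab: "\<alpha> \<noteq> \<beta>" using al by auto
    obtain q1 f where q1: "q1 \<in> Q" "f \<in> E2" "p \<in> f" "q1 \<in> f" "\<pi> q1 = \<alpha>"
      using True unfolding A2_def by auto
    define R where "R = {(q,q'). q \<in> Q \<and> q' \<in> Q \<and>
       ((\<pi> q = \<alpha> \<and> \<pi> q' = \<beta> \<and> (\<exists>g\<in>E2. q\<in>g \<and> q'\<in>g)) \<or>
        (\<pi> q = \<beta> \<and> \<pi> q' = \<alpha> \<and> (\<exists>g\<in>E1. q\<in>g \<and> q'\<in>g)))}"
    define S where "S = {q. (q, q1) \<in> R\<^sup>*}"
    define sw where "sw = (\<lambda>c. if c = \<alpha> then \<beta> else if c = \<beta> then \<alpha> else c)"
    define \<pi>' where "\<pi>' = (\<lambda>q. if q \<in> S then sw (\<pi> q) else \<pi> q)"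
    have injg: "inj_on \<pi> (g\<inter>Q)" if "g \<in> E1\<union>E2" for g
      using good that unfolding good_col_def by blast
    have injg': "a = b" if "g \<in> E1\<union>E2" "a \<in> g" "b \<in> g" "a \<in> Q" "b \<in> Q" "\<pi> a = \<pi> b" for g a b
      using injg[OF that(1)] that(2-6) unfolding inj_on_def by blast
    have Rcases: "q \<in> Q \<and> a \<in> Q \<and>
       ((\<pi> q = \<alpha> \<and> \<pi> a = \<beta> \<and> (\<exists>g\<in>E2. q\<in>g \<and> a\<in>g)) \<or>
        (\<pi> q = \<beta> \<and> \<pi> a = \<alpha> \<and> (\<exists>g\<in>E1. q\<in>g \<and> a\<in>g)))" if "(q,a) \<in> R" for q a
      using that unfolding R_def by simp
    have Rfun: "a = b" if qa: "(q,a) \<in> R" and qb: "(q,b) \<in> R" for q a b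
    proof (cases "\<pi> q = \<alpha>")
      case True
      then obtain g g' where gg: "g\<in>E2" "q\<in>g" "a\<in>g" "g'\<in>E2" "q\<in>g'" "b\<in>g'" "\<pi> a = \<beta>" "\<pi> b = \<beta>"
        using Rcases[OF qa] Rcases[OF qb] ab by auto
      then have "g = g'" using u2 by blast
      then show ?thesis using injg'[of g a b] gg Rcases[OF qa] Rcases[OF qb] by simp
    next
      case False
      then obtain g g' where gg: "g\<in>E1" "q\<in>g" "a\<in>g" "g'\<in>E1" "q\<in>g'" "b\<in>g'" "\<pi> a = \<alpha>" "\<pi> b = \<alpha>"
        using Rcases[OF qa] Rcases[OF qb] ab by auto
      then have "g = g'" using u1 by blast
      then show ?thesis using injg'[of g a b] gg Rcases[OF qa] Rcases[OF qb] by simp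
    qed
    have q1ns: "(q1, d) \<notin> R" for d
    proof
      assume qd: "(q1,d) \<in> R"
      then obtain g where g: "g \<in> E2" "q1 \<in> g" "d \<in> g" "\<pi> d = \<beta>" "d \<in> Q"
        using q1 ab Rcases[OF qd] by auto
      have "g = f" using u2[OF g(1) q1(2) g(2) q1(4)] .
      then have "\<beta> \<in> A2" using A2mem[OF g(5) q1(2) q1(3)] g by simp
      then show False using be by blast
    qed
    have q1S: "q1 \<in> S" unfolding S_def by simp
    have Ssucc: "\<exists>d. (q,d) \<in> R \<and> d \<in> S" if "q \<in> S" "q \<noteq> q1" for q
    proof -
      have "(q,q1) \<in> R\<^sup>*" using that(1) unfolding S_def by simp
      then show ?thesis using that(2) unfolding S_def
        by (cases rule: converse_rtranclE) auto
    qed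
    have Sab: "\<pi> q = \<alpha> \<or> \<pi> q = \<beta>" if qS: "q \<in> S" for q
    proof (cases "q = q1")
      case True then show ?thesis using q1 by simp
    next
      case False
      then obtain d where "(q,d) \<in> R" using Ssucc[OF qS False] by blast
      then show ?thesis using Rcases by blast
    qed
    have Sclosed: "b \<in> S" if aS: "a \<in> S" "(a,b) \<in> R \<or> (b,a) \<in> R" for a b
      using that(2)
    proof
      assume ab': "(a,b) \<in> R"
      then have "a \<noteq> q1" using q1ns by blast
      then obtain d where "(a,d) \<in> R" "d \<in> S" using Ssucc[OF aS(1)] by blast
      then show ?thesis using Rfun[OF ab'] by simp
    next
      assume "(b,a) \<in> R"
      then show ?thesis using that(1) unfolding S_def
        by (simp add: converse_rtrancl_into_rtrancl)
    qed
    have Ri1: "(q,q') \<in> R" if "q\<in>Q" "q'\<in>Q" "\<pi> q = \<alpha>" "\<pi> q' = \<beta>" "g\<in>E2" "q\<in>g" "q'\<in>g" for q q' g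
      unfolding R_def using that by blast
    have Ri2: "(q,q') \<in> R" if "q\<in>Q" "q'\<in>Q" "\<pi> q = \<beta>" "\<pi> q' = \<alpha>" "g\<in>E1" "q\<in>g" "q'\<in>g" for q q' g
      unfolding R_def using that by blast
    have Rboth: "(a,b) \<in> R \<or> (b,a) \<in> R"
      if "g \<in> E1\<union>E2" "a \<in> g" "a \<in> Q" "b \<in> g" "b \<in> Q" "\<pi> a \<noteq> \<pi> b"
         "\<pi> a = \<alpha> \<or> \<pi> a = \<beta>" "\<pi> b = \<alpha> \<or> \<pi> b = \<beta>" for g a b
    proof (cases "\<pi> a = \<alpha>")
      case pa: True
      then have pb: "\<pi> b = \<beta>" using that(6,8) by auto
      show ?thesis
      proof (cases "g \<in> E1")
        case True then show ?thesis using Ri2[of b a g] that pa pb by blast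
      next
        case False then have "g \<in> E2" using that(1) by blast
        then show ?thesis using Ri1[of a b g] that pa pb by blast
      qed
    next
      case pa: False
      then have pa: "\<pi> a = \<beta>" "\<pi> b = \<alpha>" using that(6,7,8) by auto
      show ?thesis
      proof (cases "g \<in> E1")
        case True then show ?thesis using Ri2[of a b g] that pa by blast
      next
        case False then have "g \<in> E2" using that(1) by blast
        then show ?thesis using Ri1[of b a g] that pa by blast
      qed
    qed
    have swinv: "sw (sw c) = c" for c unfolding sw_def using ab by auto
    have swlt: "sw c < w" if "c < w" for c unfolding sw_def using that al be by auto
    have good': "good_col E1 E2 w Q \<pi>'"
      unfolding good_col_def
    proof (intro ballI conjI)
      fix g assume g: "g \<in> E1\<union>E2"
      have "\<pi> ` (g\<inter>Q) \<subseteq> {..<w}" using good g unfolding good_col_def by blast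
      then show "\<pi>' ` (g\<inter>Q) \<subseteq> {..<w}"
        using swlt unfolding \<pi>'_def by auto
      show "inj_on \<pi>' (g\<inter>Q)"
      proof (rule inj_onI)
        fix a b assume a: "a \<in> g\<inter>Q" and b: "b \<in> g\<inter>Q" and eq: "\<pi>' a = \<pi>' b"
        have mixed: False if "x \<in> S" "y \<notin> S" "x \<in> g\<inter>Q" "y \<in> g\<inter>Q" "sw (\<pi> x) = \<pi> y" for x y
        proof -
          have xab: "\<pi> x = \<alpha> \<or> \<pi> x = \<beta>" using Sab that(1) by blast
          have "\<pi> y \<noteq> \<pi> x" "\<pi> y = \<alpha> \<or> \<pi> y = \<beta>" using xab that(5) ab unfolding sw_def by auto
          then have "(x,y) \<in> R \<or> (y,x) \<in> R" using Rboth[OF g, of x y] that(3,4) xab by auto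
          then show False using Sclosed[OF that(1)] that(2) by blast
        qed
        show "a = b"
        proof (cases "a \<in> S"; cases "b \<in> S")
          assume "a \<in> S" "b \<in> S"
          then have "sw (\<pi> a) = sw (\<pi> b)" using eq unfolding \<pi>'_def by simp
          then have "\<pi> a = \<pi> b" using swinv by metis
          then show ?thesis using injg'[OF g] a b by blast
        next
          assume "a \<notin> S" "b \<notin> S"
          then have "\<pi> a = \<pi> b" using eq unfolding \<pi>'_def by simp
          then show ?thesis using injg'[OF g] a b by blast
        next
          assume "a \<in> S" "b \<notin> S"
          then show ?thesis using mixed[of a b] eq a b unfolding \<pi>'_def by simp
        next
          assume "a \<notin> S" "b \<in> S"
          then show ?thesis using mixed[of b a] eq a b unfolding \<pi>'_def by simp
        qed
      qed
    qed
    have missal: "\<forall>g\<in>E1\<union>E2. p \<in> g \<longrightarrow> \<alpha> \<notin> \<pi>' ` (g\<inter>Q)"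
    proof (intro ballI impI notI)
      fix g assume g: "g \<in> E1\<union>E2" "p \<in> g" "\<alpha> \<in> \<pi>' ` (g\<inter>Q)"
      then obtain c where c: "c \<in> g" "c \<in> Q" "\<pi>' c = \<alpha>" by auto
      show False
      proof (cases "c \<in> S")
        case True
        have "sw (\<pi> c) = \<alpha>" using c(3) True unfolding \<pi>'_def by simp
        then have pc: "\<pi> c = \<beta>" using Sab[OF True] ab unfolding sw_def by auto
        show False
        proof (cases "g \<in> E1")
          case gE1: True
          have "c \<noteq> q1" using pc q1 ab by auto
          then obtain d where d: "(c,d) \<in> R" using Ssucc[OF True] by blast
          then obtain g' where g': "g' \<in> E1" "c \<in> g'" "d \<in> g'" "\<pi> d = \<alpha>" "d \<in> Q"
            using pc ab Rcases[OF d] by auto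
          have "g' = g" using u1[OF g'(1) gE1 g'(2) c(1)] .
          then have "\<alpha> \<in> A1" using A1mem[OF g'(5) gE1 g(2)] g' by simp
          then show False using al by blast
        next
          case False
          then have "g \<in> E2" using g by blast
          then have "\<beta> \<in> A2" using A2mem[OF c(2) _ g(2) c(1)] pc by simp
          then show False using be by blast
        qed
      next
        case False
        then have pc: "\<pi> c = \<alpha>" using c unfolding \<pi>'_def by simp
        show False
        proof (cases "g \<in> E1")
          case True
          then have "\<alpha> \<in> A1" using A1mem[OF c(2) True g(2) c(1)] pc by simp
          then show False using al by blast
        next
          case gE2: False
          then have "g \<in> E2" using g by blast
          then have "g = f" using u2[OF _ q1(2) g(2) q1(3)] by blast
          then have "c = q1" using injg'[of f c q1] q1 c pc by simp
          then show False using False q1S by simp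
        qed
      qed
    qed
    show ?thesis using good_col_ext[OF good' al(1) pQ missal] by blast
  qed
qed

lemma konig:
  fixes E1 E2 :: "nat set set"
  assumes d1: "\<forall>e\<in>E1. \<forall>e'\<in>E1. e \<noteq> e' \<longrightarrow> e \<inter> e' = {}"
    and d2: "\<forall>e\<in>E2. \<forall>e'\<in>E2. e \<noteq> e' \<longrightarrow> e \<inter> e' = {}"
    and fin: "\<forall>g\<in>E1\<union>E2. finite g \<and> card g \<le> w" and w0: "0 < w"
    and fE: "finite E1" "finite E2"
  shows "\<exists>\<pi>. \<forall>g\<in>E1\<union>E2. inj_on \<pi> g \<and> \<pi> ` g \<subseteq> {..<w}"
proof -
  have "\<exists>\<pi>. good_col E1 E2 w Q \<pi>" if "finite Q" for Q
    using that
  proof (induction Q rule: finite_induct)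
    case empty
    then show ?case unfolding good_col_def by auto
  next
    case (insert p Q)
    then obtain \<pi> where "good_col E1 E2 w Q \<pi>" by blast
    then show ?case using konig_step[OF d1 d2 fin w0 _ insert(2)] by blast
  qed
  moreover have "finite (\<Union>(E1\<union>E2))" using fE fin by blast
  ultimately obtain \<pi> where "good_col E1 E2 w (\<Union>(E1\<union>E2)) \<pi>" by blast
  moreover have "g \<inter> \<Union>(E1\<union>E2) = g" if "g \<in> E1\<union>E2" for g using that by blast
  ultimately show ?thesis unfolding good_col_def by metis
qed



lemma double_count:
  assumes "finite A" "finite B"
  shows "(\<Sum>x\<in>A. card {y\<in>B. P x y}) = (\<Sum>y\<in>B. card {x\<in>A. P x y})"
proof -
  have c: "card {y\<in>B'. Q y} = (\<Sum>y\<in>B'. if Q y then 1 else 0)" if "finite B'" for B' and Q :: "'c \<Rightarrow> bool"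
    using that by (simp add: sum.If_cases Int_def)
  have "(\<Sum>x\<in>A. card {y\<in>B. P x y}) = (\<Sum>x\<in>A. \<Sum>y\<in>B. if P x y then 1 else 0)"
    by (rule sum.cong[OF refl], rule c[OF assms(2)])
  also have "\<dots> = (\<Sum>y\<in>B. \<Sum>x\<in>A. if P x y then 1 else 0)" by (rule sum.swap)
  also have "\<dots> = (\<Sum>y\<in>B. card {x\<in>A. P x y})"
    by (rule sum.cong[OF refl], rule c[OF assms(1), symmetric])
  finally show ?thesis .
qed

lemma matching:
  fixes F :: "nat set set"
  assumes edges: "\<forall>e\<in>F. e \<subseteq> {0..<n} \<and> card e = w" and cF: "card F = n div w"
    and ar: "almost_regular n F" and w0: "0 < w" and wn: "w \<le> n"
  shows "\<forall>e\<in>F. \<forall>e'\<in>F. e \<noteq> e' \<longrightarrow> e \<inter> e' = {}"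
proof (intro ballI impI, rule ccontr)
  fix e e' assume e: "e \<in> F" "e' \<in> F" "e \<noteq> e'" "e \<inter> e' \<noteq> {}"
  have "0 < n div w" using w0 wn by (simp add: div_greater_zero_iff)
  then have finF: "finite F" using cF card.infinite by fastforce
  have "(\<Sum>v\<in>{0..<n}. hdegree F v) = (\<Sum>g\<in>F. card {v\<in>{0..<n}. v \<in> g})"
    unfolding hdegree_def using double_count[OF finF, of "{0..<n}" "\<lambda>g v. v \<in> g"] by simp
  also have "\<dots> = (\<Sum>g\<in>F. w)"
  proof (rule sum.cong)
    fix g assume "g \<in> F"
    then have gs: "g \<subseteq> {0..<n}" "card g = w" using edges by auto
    then have "{v\<in>{0..<n}. v \<in> g} = g" by auto
    then show "card {v\<in>{0..<n}. v \<in> g} = w" using gs by simp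
  qed simp
  also have "\<dots> = (n div w) * w" using cF by simp
  also have "\<dots> \<le> n" by simp
  finally have sle: "(\<Sum>v\<in>{0..<n}. hdegree F v) \<le> n" .
  obtain v where v: "v \<in> e" "v \<in> e'" using e by blast
  have "e \<subseteq> {0..<n}" using e(1) edges by blast
  then have vn: "v < n" using v by auto
  have "{e,e'} \<subseteq> {g\<in>F. v \<in> g}" using v e by auto
  then have "card {e,e'} \<le> hdegree F v" unfolding hdegree_def by (intro card_mono) (use finF in auto)
  then have dv: "2 \<le> hdegree F v" using e by simp
  have du: "1 \<le> hdegree F u" if "u < n" for u
    using ar vn that dv unfolding almost_regular_def by fastforce
  have s1: "(\<Sum>v\<in>{0..<n}. hdegree F v) = hdegree F v + (\<Sum>u\<in>{0..<n}-{v}. hdegree F u)"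
    using vn by (subst sum.remove[of _ v]) auto
  have s2: "(\<Sum>u\<in>{0..<n}-{v}. hdegree F u) \<ge> (\<Sum>u\<in>{0..<n}-{v}. 1)"
    by (rule sum_mono) (use du in auto)
  have s3: "(\<Sum>u\<in>{0..<n}-{v}. (1::nat)) = n - 1" using vn by simp
  show False using s1 s2 s3 sle dv vn by linarith
qed

lemma Hq_D:
  assumes "x \<in> Hq q n w"
  shows "\<And>i. n \<le> i \<Longrightarrow> x i = 0" "\<And>i. i < n \<Longrightarrow> x i < q" "card {i. i < n \<and> x i \<noteq> 0} = w"
  using assms unfolding Hq_def by auto

lemma code_bound:
  assumes C: "is_code 3 n (2*w-1) w C" and w0: "0 < w"
  shows "w * card C \<le> 2*n"
proof (cases "finite C")
  case False then show ?thesis by simp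
next
  case finC: True
  have CH: "C \<subseteq> Hq 3 n w" using C unfolding is_code_def by blast
  have dist: "\<forall>x\<in>C. \<forall>y\<in>C. x \<noteq> y \<longrightarrow> 2*w-1 \<le> hamming n x y" using C unfolding is_code_def by blast
  have le2: "card {x\<in>C. x i \<noteq> 0} \<le> 2" if "i < n" for i
  proof -
    have inj: "inj_on (\<lambda>x. x i) {x\<in>C. x i \<noteq> 0}"
    proof (rule inj_onI, rule ccontr)
      fix x y assume x: "x \<in> {x\<in>C. x i \<noteq> 0}" and y: "y \<in> {x\<in>C. x i \<noteq> 0}"
        and eq: "x i = y i" and ne: "x \<noteq> y"
      define Sx where "Sx = {j. j < n \<and> x j \<noteq> 0}"
      define Sy where "Sy = {j. j < n \<and> y j \<noteq> 0}"
      have cS: "card Sx = w" "card Sy = w" using x y CH unfolding Sx_def Sy_def Hq_def by auto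
      have fS: "finite Sx" "finite Sy" unfolding Sx_def Sy_def by auto
      have iS: "i \<in> Sx \<inter> Sy" using x y that unfolding Sx_def Sy_def by auto
      have "1 \<le> card (Sx \<inter> Sy)" using iS fS by (metis card_0_eq finite_Int empty_iff less_one not_le)
      then have cU: "card (Sx \<union> Sy) \<le> 2*w - 1" using card_Un_Int[OF fS] cS by linarith
      have "{j. j < n \<and> x j \<noteq> y j} \<subseteq> (Sx \<union> Sy) - {i}" unfolding Sx_def Sy_def using eq by auto
      then have "hamming n x y \<le> card ((Sx \<union> Sy) - {i})" unfolding hamming_def
        by (intro card_mono) (use fS in auto)
      also have "\<dots> = card (Sx \<union> Sy) - 1" using iS fS by simp
      finally have "hamming n x y \<le> 2*w-2" using cU by linarith
      moreover have "2*w-1 \<le> hamming n x y" using dist x y ne by blast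
      ultimately show False using w0 by linarith
    qed
    have "(\<lambda>x. x i) ` {x\<in>C. x i \<noteq> 0} \<subseteq> {1,2}"
    proof
      fix c assume "c \<in> (\<lambda>x. x i) ` {x\<in>C. x i \<noteq> 0}"
      then obtain x where "x \<in> C" "x i \<noteq> 0" "c = x i" by auto
      moreover have "x \<in> Hq 3 n w" using calculation CH by blast
      moreover have "x i < 3" using Hq_D(2)[OF calculation(4) that] .
      ultimately show "c \<in> {1,2}" by auto
    qed
    then have "card ((\<lambda>x. x i) ` {x\<in>C. x i \<noteq> 0}) \<le> card {1,2::nat}"
      by (intro card_mono) simp_all
    then have "card ((\<lambda>x. x i) ` {x\<in>C. x i \<noteq> 0}) \<le> 2" by simp
    then show ?thesis using card_image[OF inj] by simp
  qed
  have "w * card C = (\<Sum>x\<in>C. card {j\<in>{0..<n}. x j \<noteq> 0})"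
  proof -
    have "card {j\<in>{0..<n}. x j \<noteq> 0} = w" if "x \<in> C" for x
    proof -
      have "{j\<in>{0..<n}. x j \<noteq> 0} = {j. j < n \<and> x j \<noteq> 0}" by auto
      moreover have "x \<in> Hq 3 n w" using that CH by blast
      ultimately show ?thesis using Hq_D(3) by simp
    qed
    then show ?thesis by simp
  qed
  also have "\<dots> = (\<Sum>j\<in>{0..<n}. card {x\<in>C. x j \<noteq> 0})"
    using double_count[OF finC, of "{0..<n}" "\<lambda>x j. x j \<noteq> 0"] by simp
  also have "\<dots> \<le> (\<Sum>j\<in>{0..<n}. 2)" by (rule sum_mono) (use le2 in auto)
  finally show ?thesis by simp
qed

lemma Aq_eqI:
  assumes "is_code q n d w C" "\<And>C'. is_code q n d w C' \<Longrightarrow> card C' \<le> card C"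
  shows "Aq q n d w = card C"
  unfolding Aq_def
proof (rule Max_eqI)
  have "{card C |C. is_code q n d w C} \<subseteq> {..card C}" using assms(2) by auto
  then show "finite {card C |C. is_code q n d w C}" by (rule finite_subset) simp
  show "y \<le> card C" if "y \<in> {card C |C. is_code q n d w C}" for y
    using that assms(2) by auto
  show "card C \<in> {card C |C. is_code q n d w C}" using assms(1) by blast
qed

lemma arcD:
  assumes "almost_regular_coloring n w g F"
  shows "(\<Union>(i,j)\<in>{1..(n choose w) div (n div w) div g} \<times> {1..g}. F i j) = complete_hypergraph n w"
   "\<forall>(i,j)\<in>{1..(n choose w) div (n div w) div g} \<times> {1..g}. \<forall>(i',j')\<in>{1..(n choose w) div (n div w) div g} \<times> {1..g}. (i,j) \<noteq> (i',j') \<longrightarrow> F i j \<inter> F i' j' = {}"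
   "\<forall>(i,j)\<in>{1..(n choose w) div (n div w) div g} \<times> {1..g}. card (F i j) = n div w \<and> almost_regular n (F i j)"
  using assms unfolding almost_regular_coloring_def Let_def by simp_all

lemma gcD:
  assumes "good_coloring n w g F"
  shows "almost_regular_coloring n w g F"
    "\<forall>i\<in>{1..(n choose w) div (n div w) div g}. is_packing2 n (\<Union>j\<in>{1..g}. F i j)"
  using assms unfolding good_coloring_def by simp_all



theorem theorem3p3:
  fixes n w a :: nat
  assumes "0 < w" and "w \<le> n"
    and "(n div w) dvd (n choose w)"
    and "even ((n choose w) div (n div w))"
    and "a = n mod w" and "2 * a < w"
    and "\<exists>F. good_coloring n w 2 F"
  shows "\<exists>P. is_TOC 3 n (2 * w - 1) w P"
proof -
  note w0 = assms(1) and wn = assms(2)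
  obtain F where gc: "good_coloring n w 2 F" using assms(7) by blast
  define m where "m = n div w"
  define r where "r = (n choose w) div m"
  define I where "I = {1..r div 2} \<times> {1..(2::nat)}"
  have m1: "1 \<le> m" unfolding m_def using div_le_mono[OF wn, of w] w0 by simp
  have arc: "almost_regular_coloring n w 2 F" using gcD(1)[OF gc] .
  have cov: "(\<Union>(i,j)\<in>I. F i j) = complete_hypergraph n w"
    using arcD(1)[OF arc] unfolding I_def r_def m_def by simp
  have disj: "\<forall>(i,j)\<in>I. \<forall>(i',j')\<in>I. (i,j) \<noteq> (i',j') \<longrightarrow> F i j \<inter> F i' j' = {}"
    using arcD(2)[OF arc] unfolding I_def r_def m_def by simp
  have cls: "\<forall>(i,j)\<in>I. card (F i j) = m \<and> almost_regular n (F i j)"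
    using arcD(3)[OF arc] unfolding I_def r_def m_def by simp
  have pack: "\<forall>i\<in>{1..r div 2}. is_packing2 n (\<Union>j\<in>{1..2}. F i j)"
    using gcD(2)[OF gc] unfolding r_def m_def by simp
  have I_iff: "(i,j) \<in> I \<longleftrightarrow> i \<in> {1..r div 2} \<and> (j = 1 \<or> j = 2)" for i j
    unfolding I_def by (simp add: atLeastAtMost_iff) linarith
  have edge: "e \<subseteq> {0..<n} \<and> card e = w" if ij: "(i,j) \<in> I" and e: "e \<in> F i j" for i j e
  proof -
    have "e \<in> (\<Union>(i,j)\<in>I. F i j)" using UN_I[OF ij, of e "\<lambda>(i,j). F i j"] e by simp
    then have "e \<in> complete_hypergraph n w" using cov by simp
    then show ?thesis unfolding complete_hypergraph_def by simp
  qed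
  have efin: "finite e" if "(i,j) \<in> I" "e \<in> F i j" for i j e
    using edge[OF that] finite_subset[of e "{0..<n}"] by simp
  have cF: "card (F i j) = m" and arF: "almost_regular n (F i j)" if ij: "(i,j) \<in> I" for i j
    using bspec[OF cls ij] by simp_all
  have finF: "finite (F i j)" if "(i,j) \<in> I" for i j
  proof (rule ccontr)
    assume "infinite (F i j)"
    then have "card (F i j) = 0" by simp
    then show False using cF[OF that] m1 by simp
  qed
  have match: "e = e'" if ij: "(i,j) \<in> I" and ee: "e \<in> F i j" "e' \<in> F i j" "x \<in> e" "x \<in> e'" for i j e e' x
  proof -
    have E: "\<forall>e\<in>F i j. e \<subseteq> {0..<n} \<and> card e = w" using edge[OF ij] by blast
    have C: "card (F i j) = n div w" using cF[OF ij] unfolding m_def .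
    have D: "\<forall>e\<in>F i j. \<forall>e'\<in>F i j. e \<noteq> e' \<longrightarrow> e \<inter> e' = {}"
      by (rule matching[OF E C arF[OF ij] w0 wn])
    show ?thesis
    proof (rule ccontr)
      assume "e \<noteq> e'"
      then have "e \<inter> e' = {}" using D ee(1,2) by blast
      then show False using ee(3,4) by blast
    qed
  qed
  have cdisj: "i = i' \<and> j = j'" if ij: "(i,j) \<in> I" and ij': "(i',j') \<in> I" and e: "e \<in> F i j" "e \<in> F i' j'" for i j i' j' e
  proof (rule ccontr)
    assume ne: "\<not> (i = i' \<and> j = j')"
    have "\<forall>(i',j')\<in>I. (i,j) \<noteq> (i',j') \<longrightarrow> F i j \<inter> F i' j' = {}" using bspec[OF disj ij] by simp
    then have "(i,j) \<noteq> (i',j') \<longrightarrow> F i j \<inter> F i' j' = {}" using bspec[OF _ ij'] by fast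
    then have "F i j \<inter> F i' j' = {}" using ne by simp
    then show False using e by blast
  qed
  have konig_i: "\<exists>\<pi>. \<forall>g\<in>F i 1 \<union> F i 2. inj_on \<pi> g \<and> \<pi> ` g \<subseteq> {..<w}" if "i \<in> {1..r div 2}" for i
  proof -
    have I1: "(i,1) \<in> I" and I2: "(i,2) \<in> I" using that I_iff by auto
    have A: "\<forall>e\<in>F i 1. \<forall>e'\<in>F i 1. e \<noteq> e' \<longrightarrow> e \<inter> e' = {}"
      using match[OF I1] by blast
    have B: "\<forall>e\<in>F i 2. \<forall>e'\<in>F i 2. e \<noteq> e' \<longrightarrow> e \<inter> e' = {}"
      using match[OF I2] by blast
    have C: "\<forall>g\<in>F i 1 \<union> F i 2. finite g \<and> card g \<le> w"
    proof
      fix g assume "g \<in> F i 1 \<union> F i 2"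
      then show "finite g \<and> card g \<le> w"
      proof
        assume "g \<in> F i 1" then show ?thesis using edge[OF I1] efin[OF I1] by simp
      next
        assume "g \<in> F i 2" then show ?thesis using edge[OF I2] efin[OF I2] by simp
      qed
    qed
    show ?thesis by (rule konig[OF A B C w0 finF[OF I1] finF[OF I2]])
  qed
  have "\<forall>i\<in>{1..r div 2}. \<exists>\<pi>. \<forall>g\<in>F i 1 \<union> F i 2. inj_on \<pi> g \<and> \<pi> ` g \<subseteq> {..<w}"
    using konig_i by blast
  then obtain pi where pi: "\<forall>i\<in>{1..r div 2}. \<forall>g\<in>F i 1 \<union> F i 2. inj_on (pi i) g \<and> pi i ` g \<subseteq> {..<w}"
    by (rule bchoice[elim_format]) blast
  have pib: "inj_on (pi i) e \<and> pi i ` e = {..<w}" if ij: "(i,j) \<in> I" and e: "e \<in> F i j" for i j e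
  proof -
    have ir: "i \<in> {1..r div 2}" and jj: "j = 1 \<or> j = 2" using ij I_iff by auto
    have "e \<in> F i 1 \<union> F i 2" using jj e by auto
    then have inj: "inj_on (pi i) e" and sub: "pi i ` e \<subseteq> {..<w}" using bspec[OF pi ir] by auto
    have "card (pi i ` e) = w" using card_image[OF inj] edge[OF ij e] by simp
    then have "pi i ` e = {..<w}" using sub by (intro card_subset_eq) auto
    then show ?thesis using inj by simp
  qed
  have pilt: "pi i p < w" if "(i,j) \<in> I" "e \<in> F i j" "p \<in> e" for i j e p
    using pib[OF that(1,2)] that(3) by blast
  define K where "K = {k::nat\<Rightarrow>nat. \<forall>c. (c<w \<longrightarrow> k c = 1 \<or> k c = 2) \<and> (w \<le> c \<longrightarrow> k c = 0)}"
  define wd where "wd = (\<lambda>i j e (k::nat\<Rightarrow>nat) (p::nat). if p\<in>e then (if j = (1::nat) then k (pi i p) else 3 - k (pi i p)) else (0::nat))"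
  define code where "code = (\<lambda>i k. (\<Union>j\<in>{1..2::nat}. (\<lambda>e. wd i j e k) ` F i j))"
  define P where "P = {code i k | i k. i \<in> {1..r div 2} \<and> k \<in> K}"
  have Kv: "k c = 1 \<or> k c = 2" if "k \<in> K" "c < w" for k c using that unfolding K_def by blast
  have K0: "k c = 0" if "k \<in> K" "w \<le> c" for k c using that unfolding K_def by blast
  have wd_in: "wd i j e k p = 1 \<or> wd i j e k p = 2"
    if "(i,j) \<in> I" "e \<in> F i j" "k \<in> K" "p \<in> e" for i j e k p
  proof -
    have "k (pi i p) = 1 \<or> k (pi i p) = 2" using Kv[OF that(3) pilt[OF that(1,2,4)]] .
    then show ?thesis unfolding wd_def using that(4) by auto
  qed
  have wd_out: "wd i j e k p = 0" if "p \<notin> e" for i j e k p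
    using that unfolding wd_def by simp
  have wd_supp: "{p. p < n \<and> wd i j e k p \<noteq> 0} = e"
    if "(i,j) \<in> I" "e \<in> F i j" "k \<in> K" for i j e k
  proof
    show "{p. p < n \<and> wd i j e k p \<noteq> 0} \<subseteq> e"
    proof
      fix p assume "p \<in> {p. p < n \<and> wd i j e k p \<noteq> 0}"
      then have "wd i j e k p \<noteq> 0" by simp
      then show "p \<in> e" by (cases "p \<in> e") (simp_all add: wd_out)
    qed
    have "e \<subseteq> {0..<n}" using edge[OF that(1,2)] by simp
    then show "e \<subseteq> {p. p < n \<and> wd i j e k p \<noteq> 0}" using wd_in[OF that] by fastforce
  qed
  have wd_Hq: "wd i j e k \<in> Hq 3 n w"
    if "(i,j) \<in> I" "e \<in> F i j" "k \<in> K" for i j e k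
  proof -
    have es: "e \<subseteq> {0..<n}" "card e = w" using edge[OF that(1,2)] by simp_all
    have A: "\<forall>p. n \<le> p \<longrightarrow> wd i j e k p = 0"
    proof (intro allI impI)
      fix p assume "n \<le> p"
      then have "p \<notin> e" using es(1) by auto
      then show "wd i j e k p = 0" by (rule wd_out)
    qed
    have B: "\<forall>p<n. wd i j e k p < 3"
    proof (intro allI impI)
      fix p assume "p < n"
      show "wd i j e k p < 3"
      proof (cases "p \<in> e")
        case True then show ?thesis using wd_in[OF that True] by auto
      next
        case False then show ?thesis using wd_out by simp
      qed
    qed
    have C: "card {p. p < n \<and> wd i j e k p \<noteq> 0} = w" using wd_supp[OF that] es(2) by simp
    show ?thesis unfolding Hq_def mem_Collect_eq by (intro conjI A B C)
  qed
  have wd_inj: "i = i' \<and> j = j' \<and> e = e' \<and> k = k'"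
    if h: "(i,j) \<in> I" "e \<in> F i j" "k \<in> K" "(i',j') \<in> I" "e' \<in> F i' j'" "k' \<in> K"
      and eq: "wd i j e k = wd i' j' e' k'" for i j e k i' j' e' k'
  proof -
    have ee: "e = e'" using wd_supp[OF h(1-3)] wd_supp[OF h(4-6)] eq by simp
    have ii: "i = i' \<and> j = j'" using cdisj[OF h(1) h(4) h(2)] h(5) ee by simp
    have "k c = k' c" for c
    proof (cases "c < w")
      case True
      then have "c \<in> pi i ` e" using pib[OF h(1,2)] by simp
      then obtain p where p: "p \<in> e" "pi i p = c" by blast
      have "wd i j e k p = wd i j e k' p" using eq ee ii by simp
      moreover have "wd i j e k p = (if j = 1 then k c else 3 - k c)"
        "wd i j e k' p = (if j = 1 then k' c else 3 - k' c)" using p unfolding wd_def by simp_all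
      ultimately have "(if j = 1 then k c else 3 - k c) = (if j = 1 then k' c else 3 - k' c)"
        by simp
      moreover have "k c = 1 \<or> k c = 2" "k' c = 1 \<or> k' c = 2" using Kv h(3,6) True by auto
      ultimately show ?thesis by (cases "j = 1") auto
    next
      case False
      then have "w \<le> c" by simp
      then show ?thesis using K0[OF h(3)] K0[OF h(6)] by simp
    qed
    then show ?thesis using ee ii by auto
  qed
  have code_eq: "code i k = (\<lambda>e. wd i 1 e k) ` F i 1 \<union> (\<lambda>e. wd i 2 e k) ` F i 2" for i k
  proof -
    have "{1..2::nat} = {1,2}" by auto
    then show ?thesis unfolding code_def by simp
  qed
  have code_mem: "\<exists>j e. (i,j) \<in> I \<and> e \<in> F i j \<and> x = wd i j e k"
    if "i \<in> {1..r div 2}" "x \<in> code i k" for i k x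
  proof -
    have I1: "(i,1) \<in> I" and I2: "(i,2) \<in> I" using that(1) I_iff by auto
    show ?thesis using that(2) I1 I2 unfolding code_eq by blast
  qed
  have code_card: "card (code i k) = 2 * m" if ir: "i \<in> {1..r div 2}" and k: "k \<in> K" for i k
  proof -
    have I1: "(i,1) \<in> I" and I2: "(i,2) \<in> I" using ir I_iff by auto
    have inj1: "inj_on (\<lambda>e. wd i 1 e k) (F i 1)"
      by (rule inj_onI) (use wd_inj[OF I1 _ k I1 _ k] in blast)
    have inj2: "inj_on (\<lambda>e. wd i 2 e k) (F i 2)"
      by (rule inj_onI) (use wd_inj[OF I2 _ k I2 _ k] in blast)
    have dj: "(\<lambda>e. wd i 1 e k) ` F i 1 \<inter> (\<lambda>e. wd i 2 e k) ` F i 2 = {}"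
    proof (rule ccontr)
      assume "(\<lambda>e. wd i 1 e k) ` F i 1 \<inter> (\<lambda>e. wd i 2 e k) ` F i 2 \<noteq> {}"
      then obtain e e' where "e \<in> F i 1" "e' \<in> F i 2" "wd i 1 e k = wd i 2 e' k" by blast
      then show False using wd_inj[OF I1 _ k I2 _ k] by fastforce
    qed
    have "card (code i k) = card ((\<lambda>e. wd i 1 e k) ` F i 1) + card ((\<lambda>e. wd i 2 e k) ` F i 2)"
      unfolding code_eq by (rule card_Un_disjoint) (use finF[OF I1] finF[OF I2] dj in auto)
    also have "\<dots> = m + m" using card_image[OF inj1] card_image[OF inj2] cF[OF I1] cF[OF I2] by simp
    finally show ?thesis by simp
  qed
  have code_is: "is_code 3 n (2*w-1) w (code i k)" if ir: "i \<in> {1..r div 2}" and k: "k \<in> K" for i k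
  proof -
    have ne: "code i k \<noteq> {}" using code_card[OF ir k] m1 by auto
    have sub: "code i k \<subseteq> Hq 3 n w"
    proof
      fix x assume "x \<in> code i k"
      then obtain j e where "(i,j) \<in> I" "e \<in> F i j" "x = wd i j e k" using code_mem[OF ir] by blast
      then show "x \<in> Hq 3 n w" using wd_Hq k by simp
    qed
    have dist: "2*w-1 \<le> hamming n x y" if xy: "x \<in> code i k" "y \<in> code i k" "x \<noteq> y" for x y
    proof -
      obtain j e where je: "(i,j) \<in> I" "e \<in> F i j" "x = wd i j e k" using code_mem[OF ir xy(1)] by blast
      obtain j' e' where je': "(i,j') \<in> I" "e' \<in> F i j'" "y = wd i j' e' k" using code_mem[OF ir xy(2)] by blast
      have ene: "e \<noteq> e'"
      proof
        assume "e = e'"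
        then have "j = j'" using cdisj[OF je(1) je'(1) je(2)] je'(2) by simp
        then show False using xy(3) je je' \<open>e = e'\<close> by simp
      qed
      have es: "e \<subseteq> {0..<n}" "card e = w" using edge[OF je(1,2)] by simp_all
      have es': "e' \<subseteq> {0..<n}" "card e' = w" using edge[OF je'(1,2)] by simp_all
      have fe: "finite e" "finite e'" using efin je je' by blast+
      have sub: "e \<union> e' \<subseteq> {p. p < n \<and> x p \<noteq> y p}"
      proof
        fix p assume p: "p \<in> e \<union> e'"
        have pn: "p < n" using p es(1) es'(1) by auto
        have "x p \<noteq> y p"
        proof (cases "p \<in> e \<and> p \<in> e'")
          case True
          have jj: "j \<noteq> j'"
          proof
            assume "j = j'"
            then show False using match[OF je(1) je(2)] je'(2) True ene by blast
          qed
          have kv: "k (pi i p) = 1 \<or> k (pi i p) = 2" using Kv[OF k pilt[OF je(1,2)]] True by blast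
          have "x p = (if j = 1 then k (pi i p) else 3 - k (pi i p))"
            "y p = (if j' = 1 then k (pi i p) else 3 - k (pi i p))"
            using True je(3) je'(3) unfolding wd_def by simp_all
          moreover have "j = 1 \<or> j = 2" "j' = 1 \<or> j' = 2" using je(1) je'(1) I_iff by auto
          ultimately show ?thesis using jj kv by auto
        next
          case False
          then show ?thesis
          proof (cases "p \<in> e")
            case True
            then have "p \<notin> e'" using False by blast
            then have "y p = 0" using je'(3) wd_out by simp
            moreover have "x p \<noteq> 0" using wd_in[OF je(1,2) k True] je(3) by auto
            ultimately show ?thesis by simp
          next
            case pe: False
            then have pe': "p \<in> e'" using p by blast
            then have "x p = 0" using je(3) wd_out pe by simp
            moreover have "y p \<noteq> 0" using wd_in[OF je'(1,2) k pe'] je'(3) by auto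
            ultimately show ?thesis by simp
          qed
        qed
        then show "p \<in> {p. p < n \<and> x p \<noteq> y p}" using pn by simp
      qed
      have int1: "card (e \<inter> e') \<le> 1"
      proof (rule ccontr)
        assume "\<not> card (e \<inter> e') \<le> 1"
        then have "2 \<le> card (e \<inter> e')" by simp
        then have c2: "2 \<le> card (e \<inter> e')" by simp
        then have "e \<inter> e' \<noteq> {}" by (metis card.empty not_numeral_le_zero)
        then obtain a where a: "a \<in> e \<inter> e'" by blast
        have "card (e \<inter> e' - {a}) = card (e \<inter> e') - 1" using a by simp
        then have "e \<inter> e' - {a} \<noteq> {}" using c2 by (metis card.empty diff_is_0_eq le_numeral_Suc numeral_2_eq_2 pred_numeral_simps(2) Suc_le_lessD not_less_eq_eq One_nat_def)
        then obtain b where b: "b \<in> e \<inter> e' - {a}" by blast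
        have ab: "a \<in> e \<inter> e'" "b \<in> e \<inter> e'" "a \<noteq> b" using a b by auto
        define A where "A = (\<Union>j\<in>{1..2::nat}. F i j)"
        have pk: "is_packing2 n A" using pack ir unfolding A_def by blast
        have abn: "a < n" "b < n" using ab es(1) by auto
        have eA: "e \<in> A" "e' \<in> A" unfolding A_def using je(1,2) je'(1,2) I_iff by auto
        have "{1..2::nat} = {1,2}" by auto
        then have "A = F i 1 \<union> F i 2" unfolding A_def by simp
        moreover have "(i,1) \<in> I" "(i,2) \<in> I" using ir I_iff by auto
        ultimately have finA: "finite A" using finF by simp
        have "{e,e'} \<subseteq> {g\<in>A. a \<in> g \<and> b \<in> g}" using eA ab by auto
        then have "card {e,e'} \<le> card {g\<in>A. a \<in> g \<and> b \<in> g}" by (rule card_mono[rotated]) (use finA in simp)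
        moreover have "card {g\<in>A. a \<in> g \<and> b \<in> g} \<le> 1" using pk abn ab(3) unfolding is_packing2_def by blast
        ultimately show False using ene by simp
      qed
      have "card (e \<union> e') + card (e \<inter> e') = card e + card e'" using card_Un_Int[OF fe] by simp
      then have "2*w-1 \<le> card (e \<union> e')" using int1 es(2) es'(2) by linarith
      also have "\<dots> \<le> hamming n x y" unfolding hamming_def by (rule card_mono[OF _ sub]) simp
      finally show ?thesis .
    qed
    show ?thesis unfolding is_code_def using ne sub dist by blast
  qed
  have bound: "card C' \<le> 2*m" if "is_code 3 n (2*w-1) w C'" for C'
  proof (rule ccontr)
    have h: "w * card C' \<le> 2*n" by (rule code_bound[OF that w0])
    have nn: "n = w*m + a" using assms(5) m_def div_mult_mod_eq[of n w] by (simp add: mult.commute)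
    assume "\<not> card C' \<le> 2*m"
    then have "2*m+1 \<le> card C'" by simp
    then have "w*(2*m+1) \<le> w * card C'" by (rule mult_le_mono2)
    moreover have "w*(2*m+1) = 2*(w*m) + w" by (simp add: algebra_simps)
    ultimately show False using h nn assms(6) by linarith
  qed
  have PD: "\<exists>i k. i \<in> {1..r div 2} \<and> k \<in> K \<and> C = code i k" if "C \<in> P" for C
    using that unfolding P_def by blast
  have opt: "optimal_code 3 n (2*w-1) w C" if CP: "C \<in> P" for C
  proof -
    obtain i k where ik: "i \<in> {1..r div 2}" "k \<in> K" "C = code i k" using PD[OF CP] by blast
    have ic: "is_code 3 n (2*w-1) w C" using code_is[OF ik(1,2)] ik(3) by simp
    have cc: "card C = 2*m" using code_card[OF ik(1,2)] ik(3) by simp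
    have "Aq 3 n (2*w-1) w = card C" by (rule Aq_eqI[OF ic]) (use bound cc in simp)
    then show ?thesis unfolding optimal_code_def using ic by simp
  qed
  have U1: "\<Union>P \<subseteq> Hq 3 n w"
  proof
    fix x assume "x \<in> \<Union>P"
    then obtain C where C: "C \<in> P" "x \<in> C" by blast
    obtain i k where ik: "i \<in> {1..r div 2}" "k \<in> K" "C = code i k" using PD[OF C(1)] by blast
    have "C \<subseteq> Hq 3 n w" using code_is[OF ik(1,2)] ik(3) unfolding is_code_def by simp
    then show "x \<in> Hq 3 n w" using C(2) by blast
  qed
  have U2: "Hq 3 n w \<subseteq> \<Union>P"
  proof
    fix x assume x: "x \<in> Hq 3 n w"
    define S where "S = {p. p < n \<and> x p \<noteq> 0}"
    have cS: "card S = w" using Hq_D(3)[OF x] unfolding S_def .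
    have "S \<subseteq> {0..<n}" unfolding S_def by auto
    then have "S \<in> complete_hypergraph n w" unfolding complete_hypergraph_def using cS by simp
    then have "S \<in> (\<Union>(i,j)\<in>I. F i j)" using cov by simp
    then obtain i j where ij: "(i,j) \<in> I" and SF: "S \<in> F i j" by auto
    have ir: "i \<in> {1..r div 2}" and jj: "j = 1 \<or> j = 2" using ij I_iff by auto
    have pb: "inj_on (pi i) S" "pi i ` S = {..<w}" using pib[OF ij SF] by simp_all
    have xv: "x p = 1 \<or> x p = 2" if "p \<in> S" for p
    proof -
      have "p < n" "x p \<noteq> 0" using that unfolding S_def by simp_all
      moreover have "x p < 3" using Hq_D(2)[OF x] calculation(1) .
      ultimately show ?thesis by auto
    qed
    have invS: "inv_into S (pi i) c \<in> S" if "c < w" for c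
      using pb(2) that by (intro inv_into_into) simp
    define k where "k = (\<lambda>c. if c < w then (if j = 1 then x (inv_into S (pi i) c) else 3 - x (inv_into S (pi i) c)) else 0)"
    have kK: "k \<in> K"
      unfolding K_def
    proof (intro CollectI allI conjI impI)
      fix c assume "c < w"
      then have "x (inv_into S (pi i) c) = 1 \<or> x (inv_into S (pi i) c) = 2" using xv invS by blast
      then show "k c = 1 \<or> k c = 2" unfolding k_def using \<open>c < w\<close> by auto
    next
      fix c assume "w \<le> c"
      then show "k c = 0" unfolding k_def by simp
    qed
    have xeq: "x = wd i j S k"
    proof
      fix p
      show "x p = wd i j S k p"
      proof (cases "p \<in> S")
        case True
        have pw: "pi i p < w" using pb(2) True by blast
        have iv: "inv_into S (pi i) (pi i p) = p" using inv_into_f_f[OF pb(1) True] .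
        have "wd i j S k p = (if j = 1 then k (pi i p) else 3 - k (pi i p))"
          unfolding wd_def using True by simp
        also have "\<dots> = (if j = 1 then x p else 3 - (3 - x p))"
          unfolding k_def using pw iv by simp
        also have "\<dots> = x p" using xv[OF True] by auto
        finally show ?thesis by simp
      next
        case False
        have "x p = 0"
        proof (cases "p < n")
          case True then show ?thesis using False unfolding S_def by simp
        next
          case False then show ?thesis using Hq_D(1)[OF x] by simp
        qed
        then show ?thesis using wd_out[OF False] by simp
      qed
    qed
    have "x \<in> code i k" unfolding code_eq using xeq SF jj by auto
    moreover have "code i k \<in> P" unfolding P_def using ir kK by blast
    ultimately show "x \<in> \<Union>P" by blast
  qed
  have DJ: "disjoint P"
    unfolding pairwise_def disjnt_def
  proof (intro ballI impI)
    fix C1 C2 assume C: "C1 \<in> P" "C2 \<in> P" "C1 \<noteq> C2"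
    obtain i k where ik: "i \<in> {1..r div 2}" "k \<in> K" "C1 = code i k" using PD[OF C(1)] by blast
    obtain i' k' where ik': "i' \<in> {1..r div 2}" "k' \<in> K" "C2 = code i' k'" using PD[OF C(2)] by blast
    show "C1 \<inter> C2 = {}"
    proof (rule ccontr)
      assume "C1 \<inter> C2 \<noteq> {}"
      then obtain x where "x \<in> code i k" "x \<in> code i' k'" using ik ik' by blast
      then obtain j e j' e' where "(i,j) \<in> I" "e \<in> F i j" "x = wd i j e k"
        "(i',j') \<in> I" "e' \<in> F i' j'" "x = wd i' j' e' k'"
        using code_mem[OF ik(1)] code_mem[OF ik'(1)] by metis
      then have "i = i' \<and> k = k'" using wd_inj[OF _ _ ik(2) _ _ ik'(2)] by metis
      then show False using C(3) ik ik' by simp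
    qed
  qed
  have NE: "{} \<notin> P"
  proof
    assume "{} \<in> P"
    then obtain i k where ik: "i \<in> {1..r div 2}" "k \<in> K" "{} = code i k" using PD by blast
    then show False using code_card[OF ik(1,2)] m1 by simp
  qed
  have "is_TOC 3 n (2 * w - 1) w P"
    unfolding is_TOC_def partition_on_def using U1 U2 DJ NE opt by blast
  then show ?thesis by blast
qed

end
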